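(* Let $n,k,d$ be integers with $1\le k\le d\le n-2$, set $s=d+1-k$, let $F$ be a finite field with $|F|\ge sn$, let $\{\lambda_{i,j}: i\in[n],\ j\in\{0,\dots,s-1\}\}$ be $sn$ distinct elements of $F$, and let $\mathcal{C}$ be the set of all $C=(C_1,\dots,C_n)$, $C_i=(c_{i,b,a}: b\in\{1,\dots,d+2-k\},\ a\in\{0,\dots,s^n-1\})$, satisfying $\sum_{i=1}^n \lambda_{i,a_i}^t c_{i,b,a}=0$ for all $t\in\{0,\dots,n-k-1\}$, $b\in\{1,\dots,d+2-k\}$, $a\in\{0,\dots,s^n-1\}$. Let $\mathcal{R}\subseteq[n]\setminus\{1,2\}$ with $|\mathcal{R}|=d$. Then for every $C\in\mathcal{C}$: (1) the values $\{c_{1,b,a}: a\in\{0,\dots,s^n-1\},\ b\in\{1,\dots,s\}\}\cup\{\sum_{j=0}^{s-2}c_{2,j+1,a(1,a_1\oplus j)}+c_{2,s,a(1,a_1\oplus(s-1))}: a\in\{0,\dots,s^n-1\}\}$ are uniquely determined by the values $\{\sum_{j=0}^{s-2}c_{i,j+1,a(1,a_1\oplus j)}+c_{i,s,a(1,a_1\oplus(s-1))}: a\in\{0,\dots,s^n-1\},\ i\in\mathcal{R}\}$; (2) the values $\{c_{2,b,a}: a\in\{0,\dots,s^n-1\},\ b\in\{1,\dots,s-1,s+1\}\}\cup\{\sum_{j=0}^{s-2}c_{1,j+1,a(2,a_2\oplus j)}+c_{1,s+1,a(2,a_2\oplus(s-1))}: a\in\{0,\dots,s^n-1\}\}$ are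 uniquely determined by the values $\{\sum_{j=0}^{s-2}c_{i,j+1,a(2,a_2\oplus j)}+c_{i,s+1,a(2,a_2\oplus(s-1))}: a\in\{0,\dots,s^n-1\},\ i\in\mathcal{R}\}$. (Here "uniquely determined" means: any two codewords of $\mathcal{C}$ that agree on the latter values agree on the former values.)
   Context: $[n]=\{1,\dots,n\}$. For $a\in\{0,\dots,s^n-1\}$, $(a_1,\dots,a_n)\in\{0,\dots,s-1\}^n$ denotes its $n$-digit $s$-ary expansion, and $a$ is identified with this tuple. For $i\in[n]$, $u\in\{0,\dots,s-1\}$, $a(i,u)$ denotes the element obtained from $a$ by replacing the $i$th digit $a_i$ by $u$; $\oplus$ denotes addition modulo $s$. Empty sums (when $s=1$) are zero. *)

theory Defs
  imports Main
begin

text \<open>The i-th digit (i in 1..n) of the n-digit s-ary expansion (a_1,...,a_n) of a,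
  with a = sum_i a_i * s^(n-i) (a_1 most significant).\<close>
definition digit :: "nat \<Rightarrow> nat \<Rightarrow> nat \<Rightarrow> nat \<Rightarrow> nat" where
  "digit s n a i = (a div s ^ (n - i)) mod s"

definition repl :: "nat \<Rightarrow> nat \<Rightarrow> nat \<Rightarrow> nat \<Rightarrow> nat \<Rightarrow> nat" where
  "repl s n a i u = a - digit s n a i * s ^ (n - i) + u * s ^ (n - i)"

definition code :: "nat \<Rightarrow> nat \<Rightarrow> nat \<Rightarrow> (nat \<Rightarrow> nat \<Rightarrow> 'a::field)
    \<Rightarrow> (nat \<Rightarrow> nat \<Rightarrow> nat \<Rightarrow> 'a) set" where
  "code n k d lam = {c. \<forall>t < n - k. \<forall>b \<in> {1..d + 2 - k}. \<forall>a < (d + 1 - k) ^ n.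
      (\<Sum>i = 1..n. lam i (digit (d + 1 - k) n a i) ^ t * c i b a) = 0}"

definition rsum :: "nat \<Rightarrow> nat \<Rightarrow> (nat \<Rightarrow> nat \<Rightarrow> nat \<Rightarrow> 'a::field) \<Rightarrow> nat \<Rightarrow> nat \<Rightarrow> nat \<Rightarrow> nat \<Rightarrow> 'a" where
  "rsum s n c l bl i a =
     (\<Sum>j < s - 1. c i (j + 1) (repl s n a l ((digit s n a l + j) mod s)))
     + c i bl (repl s n a l ((digit s n a l + (s - 1)) mod s))"

end

theory Submission
  imports Defs "HOL-Computational_Algebra.Polynomial"
begin


lemma vand_base:
  fixes x v :: "'b \<Rightarrow> 'a::field"
  assumes fin: "finite S" and inj: "inj_on x S" and cs: "card S \<le> m"
    and eq: "\<forall>t<m. (\<Sum>k\<in>S. x k ^ t * v k) = 0" and i: "i \<in> S"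
  shows "v i = 0"
proof -
  define p where "p = (\<Prod>k\<in>S-{i}. [:- x k, 1:])"
  have "degree p \<le> sum (degree \<circ> (\<lambda>k. [:- x k, 1:])) (S-{i})"
    unfolding p_def using fin by (intro degree_prod_sum_le) auto
  also have "\<dots> = card (S-{i})" by simp
  also have "\<dots> < m" using cs i fin by (metis card_Diff1_less le_trans less_le_trans order_refl)
  finally have dp: "degree p < m" .
  have "(\<Sum>k\<in>S. poly p (x k) * v k) = (\<Sum>k\<in>S. \<Sum>t\<le>degree p. coeff p t * (x k ^ t * v k))"
    by (simp add: poly_altdef sum_distrib_right mult.assoc)
  also have "\<dots> = (\<Sum>t\<le>degree p. coeff p t * (\<Sum>k\<in>S. x k ^ t * v k))"
    by (subst sum.swap) (simp add: sum_distrib_left)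
  also have "\<dots> = 0" using eq dp by simp
  finally have s0: "(\<Sum>k\<in>S. poly p (x k) * v k) = 0" .
  have z: "poly p (x k) = 0" if "k \<in> S - {i}" for k
    unfolding p_def poly_prod using that fin
    by (intro prod_zero) auto
  have "(\<Sum>k\<in>S. poly p (x k) * v k) = poly p (x i) * v i + (\<Sum>k\<in>S-{i}. poly p (x k) * v k)"
    using fin i by (simp add: sum.remove)
  also have "(\<Sum>k\<in>S-{i}. poly p (x k) * v k) = 0" using z by simp
  finally have "poly p (x i) * v i = 0" using s0 by simp
  moreover have "poly p (x i) \<noteq> 0"
    unfolding p_def poly_prod using fin inj i
    by (auto simp: prod_zero_iff inj_on_def)
  ultimately show ?thesis by simp
qed

lemma vand_zero:
  fixes x v :: "'b \<Rightarrow> 'a::field"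
  assumes fin: "finite S" and inj: "inj_on x S" and Z: "Z \<subseteq> S" and vz: "\<forall>k\<in>Z. v k = 0"
    and cs: "card S - card Z \<le> m"
    and eq: "\<forall>t<m. (\<Sum>k\<in>S. x k ^ t * v k) = 0" and i: "i \<in> S"
  shows "v i = 0"
proof (cases "i \<in> Z")
  case True then show ?thesis using vz by auto
next
  case False
  have fz: "finite Z" using fin Z finite_subset by auto
  have "\<forall>t<m. (\<Sum>k\<in>S-Z. x k ^ t * v k) = 0"
  proof (intro allI impI)
    fix t assume "t < m"
    have "(\<Sum>k\<in>S. x k ^ t * v k) = (\<Sum>k\<in>S-Z. x k ^ t * v k) + (\<Sum>k\<in>Z. x k ^ t * v k)"
      using fin Z by (metis sum.subset_diff)
    then show "(\<Sum>k\<in>S-Z. x k ^ t * v k) = 0" using eq \<open>t<m\<close> vz by simp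
  qed
  moreover have "card (S-Z) \<le> m" using cs Z fz by (simp add: card_Diff_subset)
  ultimately show ?thesis using vand_base[of "S-Z" x m v i] fin inj False i
    by (meson DiffI finite_Diff inj_on_diff)
qed

lemma vand2:
  fixes x v :: "'b \<Rightarrow> 'a::field" and y w :: "'c \<Rightarrow> 'a"
  assumes fA: "finite A" and fB: "finite B" and ix: "inj_on x A" and iy: "inj_on y B"
    and dis: "\<forall>i\<in>A. \<forall>j\<in>B. x i \<noteq> y j"
    and Z: "Z \<subseteq> A" and vz: "\<forall>k\<in>Z. v k = 0"
    and cs: "card A + card B - card Z \<le> m"
    and eq: "\<forall>t<m. (\<Sum>i\<in>A. x i ^ t * v i) + (\<Sum>j\<in>B. y j ^ t * w j) = 0"
  shows "(\<forall>i\<in>A. v i = 0) \<and> (\<forall>j\<in>B. w j = 0)"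
proof -
  define S where "S = Inl ` A \<union> Inr ` B"
  define X where "X = case_sum x y"
  define V where "V = case_sum v w"
  have fS: "finite S" using fA fB S_def by auto
  have dj: "Inl ` A \<inter> Inr ` B = {}" by auto
  have sumS: "(\<Sum>k\<in>S. f k) = (\<Sum>i\<in>A. f (Inl i)) + (\<Sum>j\<in>B. f (Inr j))" for f :: "_ \<Rightarrow> 'a"
  proof -
    have "(\<Sum>k\<in>S. f k) = (\<Sum>k\<in>Inl ` A. f k) + (\<Sum>k\<in>Inr ` B. f k)"
      unfolding S_def using fA fB dj by (intro sum.union_disjoint) auto
    also have "(\<Sum>k\<in>Inl ` A. f k) = (\<Sum>i\<in>A. f (Inl i))" by (simp add: sum.reindex)
    also have "(\<Sum>k\<in>Inr ` B. f k) = (\<Sum>i\<in>B. f (Inr i))" by (simp add: sum.reindex)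
    finally show ?thesis .
  qed
  have cS: "card S = card A + card B" unfolding S_def using fA fB dj
    by (simp add: card_Un_disjoint card_image)
  have iS: "inj_on X S" using ix iy dis unfolding S_def X_def inj_on_def by fastforce
  have eqS: "\<forall>t<m. (\<Sum>k\<in>S. X k ^ t * V k) = 0" using eq by (simp add: sumS X_def V_def)
  have cZ: "card (Inl ` Z :: ('b + 'c) set) = card Z" by (simp add: card_image)
  have ZS: "Inl ` Z \<subseteq> S" using Z S_def by auto
  have vZ: "\<forall>k\<in>Inl ` Z. V k = 0" using vz V_def by auto
  have cs2: "card S - card (Inl ` Z :: ('b + 'c) set) \<le> m" using cS cZ cs by simp
  have key: "V k = 0" if "k \<in> S" for k
    using vand_zero[OF fS iS ZS vZ cs2 eqS that] .
  have "\<forall>i\<in>A. v i = 0"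
  proof
    fix i assume "i \<in> A" then have "Inl i \<in> S" using S_def by auto
    then show "v i = 0" using key V_def by fastforce
  qed
  moreover have "\<forall>i\<in>B. w i = 0"
  proof
    fix i assume "i \<in> B" then have "Inr i \<in> S" using S_def by auto
    then show "w i = 0" using key V_def by fastforce
  qed
  ultimately show ?thesis by blast
qed


lemma form_div: fixes p s :: nat assumes "p > 0" "u < s" "r < p"
  shows "(Q*(p*s) + u*p + r) div p = Q*s + u" "(Q*(p*s) + u*p + r) mod p = r"
proof -
  have e: "Q*(p*s) + u*p + r = (Q*s+u)*p + r" by (simp add: algebra_simps)
  show "(Q*(p*s) + u*p + r) div p = Q*s + u" unfolding e using assms by simp
  show "(Q*(p*s) + u*p + r) mod p = r" unfolding e using assms by simp
qed

lemma form_div2: fixes p s :: nat assumes "p > 0" "u < s" "r < p"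
  shows "(Q*(p*s) + u*p + r) div (p*s) = Q"
proof -
  have "(Q*(p*s) + u*p + r) div (p*s) = ((Q*(p*s) + u*p + r) div p) div s"
    by (simp add: div_mult2_eq)
  also have "\<dots> = Q" using form_div[OF assms] assms by simp
  finally show ?thesis .
qed

lemma regroup: fixes x Q s D p r :: nat shows "x = (Q*s+D)*p + r \<Longrightarrow> x = Q*(p*s) + D*p + r"
  by (simp add: algebra_simps)

lemma decomp: fixes s :: nat assumes "s > 0"
  shows "a = (a div (s^(n-i)*s))*(s^(n-i)*s) + digit s n a i * s^(n-i) + a mod s^(n-i)"
proof -
  let ?p = "s^(n-i)"
  have 1: "a = (a div ?p) * ?p + a mod ?p" by (rule div_mult_mod_eq[symmetric])
  have 2: "a div ?p = (a div (?p*s))*s + digit s n a i" unfolding digit_def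
    by (metis div_mult_mod_eq div_mult2_eq)
  have "a = ((a div (?p*s))*s + digit s n a i)*?p + a mod ?p"
    by (subst 2[symmetric]) (rule 1)
  then show ?thesis by (rule regroup)
qed

lemma digit_lt: "s > 0 \<Longrightarrow> digit s n a i < s" unfolding digit_def by simp

lemma repl_eq: fixes s :: nat assumes "s > 0"
  shows "repl s n a i u = (a div (s^(n-i)*s))*(s^(n-i)*s) + u * s^(n-i) + a mod s^(n-i)"
proof -
  have d: "a = (a div (s^(n-i)*s))*(s^(n-i)*s) + digit s n a i * s^(n-i) + a mod s^(n-i)"
    using decomp[OF assms] .
  show ?thesis unfolding repl_def
    by (subst (1) d) simp
qed

lemma digit_form_same: fixes s :: nat assumes "s > 0" "u < s" "r < s^(n-i)"
  shows "digit s n (Q*(s^(n-i)*s) + u*s^(n-i) + r) i = u"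
  unfolding digit_def using form_div[of "s^(n-i)" u s r Q] assms by simp

lemma digit_form_hi: fixes s :: nat assumes "s > 0" "u < s" "r < s^(n-i)" "i' < i" "i \<le> n"
  shows "digit s n (Q*(s^(n-i)*s) + u*s^(n-i) + r) i' = (Q div s^(i-i'-1)) mod s"
proof -
  have ee: "n - i' = ((n-i) + 1) + (i-i'-1)" using assms by simp
  have "s^(n-i') = (s^(n-i)*s) * s^(i-i'-1)"
    by (subst ee, simp only: power_add power_one_right)
  then have "(Q*(s^(n-i)*s) + u*s^(n-i) + r) div s^(n-i') = (Q*(s^(n-i)*s) + u*s^(n-i) + r) div (s^(n-i)*s) div s^(i-i'-1)"
    by (simp only: div_mult2_eq)
  also have "\<dots> = Q div s^(i-i'-1)" using form_div2[of "s^(n-i)" u s r Q] assms by simp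
  finally show ?thesis unfolding digit_def by simp
qed

lemma digit_form_lo: fixes s :: nat assumes "s > 0" "u < s" "r < s^(n-i)" "i < i'" "i' \<le> n"
  shows "digit s n (Q*(s^(n-i)*s) + u*s^(n-i) + r) i' = (r div s^(n-i')) mod s"
proof -
  define e where "e = i' - i - 1"
  have ee: "n - i = (n-i') + (e + 1)" using assms e_def by simp
  have p: "s^(n-i) = s^(n-i') * (s^e*s)"
    by (subst ee, simp only: power_add power_one_right)
  define q where "q = s^(n-i')"
  have q0: "q > 0" using assms q_def by simp
  define M where "M = (Q*(s^e*s) + u*s^e)*s"
  have x: "Q*(s^(n-i)*s) + u*s^(n-i) + r = r + M * q" unfolding p q_def M_def
    by (simp add: algebra_simps)
  have "(r + M * q) div q = r div q + M" using q0 by simp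
  then have "(Q*(s^(n-i)*s) + u*s^(n-i) + r) div q = r div q + (Q*(s^e*s) + u*s^e)*s"
    unfolding x M_def .
  then have "((Q*(s^(n-i)*s) + u*s^(n-i) + r) div q) mod s = (r div q) mod s"
    by (simp only: mod_mult_self1)
  then show ?thesis unfolding digit_def q_def .
qed

lemma digit_repl_same: fixes s :: nat assumes "s > 0" "u < s"
  shows "digit s n (repl s n a i u) i = u"
  using digit_form_same[OF assms(1,2)] repl_eq[OF assms(1)] assms by simp

lemma digit_repl_other: fixes s :: nat assumes "s > 0" "u < s" "i' \<noteq> i" "i \<le> n" "i' \<le> n"
  shows "digit s n (repl s n a i u) i' = digit s n a i'"
proof -
  define Q where "Q = a div (s^(n-i)*s)"
  define r where "r = a mod s^(n-i)"
  have r: "r < s^(n-i)" using assms r_def by simp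
  have dl: "digit s n a i < s" using assms digit_lt by auto
  have d: "a = Q*(s^(n-i)*s) + digit s n a i * s^(n-i) + r"
    using decomp[OF assms(1)] Q_def r_def by simp
  have "digit s n (Q*(s^(n-i)*s) + u * s^(n-i) + r) i' = digit s n (Q*(s^(n-i)*s) + digit s n a i * s^(n-i) + r) i'"
  proof (cases "i' < i")
    case True
    show ?thesis
      using digit_form_hi[OF assms(1) _ r True assms(4)] assms dl by simp
  next
    case False
    then have "i < i'" using assms by simp
    then show ?thesis
      using digit_form_lo[OF assms(1) _ r _ assms(5)] assms dl by simp
  qed
  then show ?thesis unfolding repl_eq[OF assms(1)] Q_def[symmetric] r_def[symmetric] using d by simp
qed

lemma repl_repl: fixes s :: nat assumes "s > 0" "u < s"
  shows "repl s n (repl s n a i u) i v = repl s n a i v"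
proof -
  define Q where "Q = a div (s^(n-i)*s)"
  define r where "r = a mod s^(n-i)"
  have r: "r < s^(n-i)" using assms r_def by simp
  have x: "repl s n a i u = Q*(s^(n-i)*s) + u * s^(n-i) + r"
    unfolding repl_eq[OF assms(1)] Q_def r_def by simp
  have p0: "s^(n-i) > 0" using assms by simp
  have "repl s n (repl s n a i u) i v = (repl s n a i u div (s^(n-i)*s))*(s^(n-i)*s) + v * s^(n-i) + repl s n a i u mod s^(n-i)"
    by (rule repl_eq[OF assms(1)])
  also have "\<dots> = Q*(s^(n-i)*s) + v * s^(n-i) + r"
    unfolding x using form_div[OF p0 assms(2) r, of Q] form_div2[OF p0 assms(2) r, of Q] by simp
  also have "\<dots> = repl s n a i v" unfolding Q_def r_def by (rule repl_eq[OF assms(1), symmetric])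
  finally show ?thesis .
qed

lemma repl_digit: fixes s :: nat assumes "s > 0"
  shows "repl s n a i (digit s n a i) = a"
  using repl_eq[OF assms] decomp[OF assms] by simp

lemma repl_lt: fixes s :: nat assumes "s > 0" "u < s" "a < s^n" "1 \<le> i" "i \<le> n"
  shows "repl s n a i u < s^n"
proof -
  let ?p = "s^(n-i)"
  have e: "i - 1 + (n - i + 1) = n" using assms by simp
  have sn: "s^n = s^(i-1) * (?p*s)"
    by (subst e[symmetric], subst power_add) simp
  have Q: "a div (?p*s) < s^(i-1)" using assms sn
    by (simp add: div_less_iff_less_mult)
  have "u * ?p + a mod ?p < ?p * s"
  proof -
    have "u * ?p + a mod ?p < u * ?p + ?p" using assms by simp
    also have "\<dots> = (u+1) * ?p" by simp
    also have "\<dots> \<le> s * ?p" using assms by (intro mult_right_mono) auto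
    finally show ?thesis by (simp add: mult.commute)
  qed
  then have "repl s n a i u < (a div (?p*s) + 1) * (?p*s)" unfolding repl_eq[OF assms(1)] by simp
  also have "\<dots> \<le> s^(i-1) * (?p*s)" using Q by (intro mult_right_mono) auto
  finally show ?thesis using sn by simp
qed


lemma modinj: "((D::nat) + j) mod s = (D + j') mod s \<Longrightarrow> j < s \<Longrightarrow> j' < s \<Longrightarrow> j = j'"
proof (induction j j' rule: linorder_wlog)
  case (le a b)
  then have "s dvd (D + b) - (D + a)" using mod_eq_dvd_iff_nat[of "D+a" "D+b" s] by simp
  then have "s dvd b - a" by simp
  moreover have "b - a < s" using le by simp
  ultimately show ?case using le by (metis dvd_imp_le le_antisym not_less diff_is_0_eq zero_less_diff)
next
  case (sym a b) then show ?case by simp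
qed
lemma rsum_alt: fixes s :: nat assumes "s > 0"
  shows "rsum s n c l bl i a = (\<Sum>j<s. c i (if j = s - 1 then bl else j + 1) (repl s n a l ((digit s n a l + j) mod s)))"
proof -
  have e: "{..<s} = insert (s-1) {..<s-1}" using assms by auto
  have "(\<Sum>j<s. c i (if j = s - 1 then bl else j + 1) (repl s n a l ((digit s n a l + j) mod s)))
     = c i bl (repl s n a l ((digit s n a l + (s-1)) mod s)) + (\<Sum>j<s-1. c i (if j = s - 1 then bl else j + 1) (repl s n a l ((digit s n a l + j) mod s)))"
    unfolding e by (subst sum.insert) auto
  also have "(\<Sum>j<s-1. c i (if j = s - 1 then bl else j + 1) (repl s n a l ((digit s n a l + j) mod s)))
     = (\<Sum>j<s-1. c i (j + 1) (repl s n a l ((digit s n a l + j) mod s)))"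
    by (rule sum.cong) auto
  finally show ?thesis unfolding rsum_def by simp
qed

lemma key:
  fixes lam :: "nat \<Rightarrow> nat \<Rightarrow> 'a::field" and c :: "nat \<Rightarrow> nat \<Rightarrow> nat \<Rightarrow> 'a"
  assumes s0: "s > 0" and sd: "s = d + 1 - k" and k1: "1 \<le> k" and kd: "k \<le> d" and dn: "d + 2 \<le> n"
    and inj: "inj_on (\<lambda>(i, j). lam i j) ({1..n} \<times> {0..<s})"
    and l: "l \<in> {1..n}" and bl: "1 \<le> bl" "bl \<le> s + 1"
    and c: "c \<in> code n k d lam" and R: "R \<subseteq> {1..n} - {l}" and cR: "card R = d"
    and z: "\<forall>a<s^n. \<forall>i\<in>R. rsum s n c l bl i a = 0" and a: "a < s^n"
  shows "(\<forall>i\<in>{1..n}-{l}. rsum s n c l bl i a = 0) \<and>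
         (\<forall>j\<in>{..<s}. c l (if j = s - 1 then bl else j + 1) (repl s n a l ((digit s n a l + j) mod s)) = 0)"
proof -
  define bc where "bc j = (if j = s - 1 then bl else j + 1)" for j
  define u where "u j = (digit s n a l + j) mod s" for j
  define aj where "aj j = repl s n a l (u j)" for j
  define A where "A = {1..n} - {l}"
  have u_lt: "u j < s" for j using s0 u_def by simp
  have aj_lt: "aj j < s^n" for j unfolding aj_def using repl_lt[OF s0 u_lt a] l by auto
  have dig_l: "digit s n (aj j) l = u j" for j unfolding aj_def using digit_repl_same[OF s0 u_lt] .
  have dig_o: "digit s n (aj j) i = digit s n a i" if "i \<in> A" for i j
    unfolding aj_def using digit_repl_other[OF s0 u_lt] that l A_def by auto
  have bc_rng: "bc j \<in> {1..d + 2 - k}" if "j < s" for j using that bl sd kd unfolding bc_def by auto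
  have rs: "rsum s n c l bl i a = (\<Sum>j<s. c i (bc j) (aj j))" for i
    unfolding rsum_alt[OF s0] bc_def aj_def u_def ..
  have lA: "{1..n} = insert l A" "l \<notin> A" "finite A" using l A_def by auto
  have eq: "(\<Sum>i\<in>A. lam i (digit s n a i) ^ t * rsum s n c l bl i a) +
            (\<Sum>j\<in>{..<s}. lam l (u j) ^ t * c l (bc j) (aj j)) = 0" if t: "t < n - k" for t
  proof -
    have col: "lam l (u j) ^ t * c l (bc j) (aj j) + (\<Sum>i\<in>A. lam i (digit s n a i) ^ t * c i (bc j) (aj j)) = 0" if jl: "j < s" for j
    proof -
      have "(\<Sum>i = 1..n. lam i (digit (d + 1 - k) n (aj j) i) ^ t * c i (bc j) (aj j)) = 0"
        using c t bc_rng[OF jl] aj_lt sd unfolding code_def by auto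
      then have "(\<Sum>i \<in> insert l A. lam i (digit s n (aj j) i) ^ t * c i (bc j) (aj j)) = 0"
        using sd lA by simp
      then have "lam l (digit s n (aj j) l) ^ t * c l (bc j) (aj j) + (\<Sum>i\<in>A. lam i (digit s n (aj j) i) ^ t * c i (bc j) (aj j)) = 0"
        using lA by (simp add: sum.insert)
      moreover have "(\<Sum>i\<in>A. lam i (digit s n (aj j) i) ^ t * c i (bc j) (aj j)) = (\<Sum>i\<in>A. lam i (digit s n a i) ^ t * c i (bc j) (aj j))"
        using dig_o by (intro sum.cong) auto
      ultimately show ?thesis using dig_l by simp
    qed
    have "0 = (\<Sum>j<s. lam l (u j) ^ t * c l (bc j) (aj j) + (\<Sum>i\<in>A. lam i (digit s n a i) ^ t * c i (bc j) (aj j)))"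
      using col by (simp add: sum.neutral)
    also have "\<dots> = (\<Sum>j<s. lam l (u j) ^ t * c l (bc j) (aj j)) + (\<Sum>i\<in>A. \<Sum>j<s. lam i (digit s n a i) ^ t * c i (bc j) (aj j))"
      by (simp only: sum.distrib sum.swap[of _ "{..<s}" A])
    also have "(\<Sum>i\<in>A. \<Sum>j<s. lam i (digit s n a i) ^ t * c i (bc j) (aj j)) = (\<Sum>i\<in>A. lam i (digit s n a i) ^ t * rsum s n c l bl i a)"
      by (simp add: rs sum_distrib_left)
    finally have "0 = (\<Sum>j<s. lam l (u j) ^ t * c l (bc j) (aj j)) + (\<Sum>i\<in>A. lam i (digit s n a i) ^ t * rsum s n c l bl i a)" .
    then show ?thesis by (metis add.commute)
  qed
  have ix: "inj_on (\<lambda>i. lam i (digit s n a i)) A"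
  proof (rule inj_onI)
    fix i i' assume ii: "i \<in> A" "i' \<in> A" "lam i (digit s n a i) = lam i' (digit s n a i')"
    have "(i, digit s n a i) = (i', digit s n a i')"
      by (rule inj_onD[OF inj]) (use ii digit_lt[OF s0] A_def in auto)
    then show "i = i'" by simp
  qed
  have iy: "inj_on (\<lambda>j. lam l (u j)) {..<s}"
  proof (rule inj_onI)
    fix j j' assume jj: "j \<in> {..<s}" "j' \<in> {..<s}" "lam l (u j) = lam l (u j')"
    then have "(l, u j) = (l, u j')"
      by (intro inj_onD[OF inj]) (use u_lt l in auto)
    then have "u j = u j'" by simp
    then have "(digit s n a l + j) mod s = (digit s n a l + j') mod s" unfolding u_def .
    then show "j = j'" by (rule modinj) (use jj in auto)
  qed
  have dis: "\<forall>i\<in>A. \<forall>j\<in>{..<s}. lam i (digit s n a i) \<noteq> lam l (u j)"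
  proof (intro ballI notI)
    fix i j assume ij: "i \<in> A" "j \<in> {..<s}" "lam i (digit s n a i) = lam l (u j)"
    have "(i, digit s n a i) = (l, u j)"
      by (rule inj_onD[OF inj]) (use ij digit_lt[OF s0] u_lt l A_def in auto)
    then show False using ij A_def by auto
  qed
  have RA: "R \<subseteq> A" using R A_def by simp
  have cA: "card A = n - 1" using l unfolding A_def by (simp add: card_Diff_singleton)
  have cs: "card A + card {..<s} - card R \<le> n - k" using cA cR sd k1 kd dn by simp
  have vz: "\<forall>i\<in>R. rsum s n c l bl i a = 0" using z a by blast
  have eq': "\<forall>t<n - k. (\<Sum>i\<in>A. lam i (digit s n a i) ^ t * rsum s n c l bl i a) +
            (\<Sum>j\<in>{..<s}. lam l (u j) ^ t * c l (bc j) (aj j)) = 0" using eq by blast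
  from vand2[OF lA(3) _ ix iy dis RA vz cs eq']
  show ?thesis unfolding A_def bc_def aj_def u_def by simp
qed

lemma key2:
  fixes lam :: "nat \<Rightarrow> nat \<Rightarrow> 'a::field" and c :: "nat \<Rightarrow> nat \<Rightarrow> nat \<Rightarrow> 'a"
  assumes s0: "s > 0" and sd: "s = d + 1 - k" and k1: "1 \<le> k" and kd: "k \<le> d" and dn: "d + 2 \<le> n"
    and inj: "inj_on (\<lambda>(i, j). lam i j) ({1..n} \<times> {0..<s})"
    and l: "l \<in> {1..n}" and bl: "1 \<le> bl" "bl \<le> s + 1"
    and c: "c \<in> code n k d lam" and R: "R \<subseteq> {1..n} - {l}" and cR: "card R = d"
    and z: "\<forall>a<s^n. \<forall>i\<in>R. rsum s n c l bl i a = 0"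
  shows "(\<forall>a<s^n. \<forall>i\<in>{1..n}-{l}. rsum s n c l bl i a = 0) \<and>
         (\<forall>a'<s^n. \<forall>j<s. c l (if j = s - 1 then bl else j + 1) a' = 0)"
proof (intro conjI allI impI)
  fix a assume "a < s^n"
  then show "\<forall>i\<in>{1..n}-{l}. rsum s n c l bl i a = 0"
    using key[OF assms] by blast
next
  fix a' j assume a': "a' < s^n" and j: "j < s"
  define D where "D = digit s n a' l"
  have D: "D < s" using digit_lt[OF s0] D_def by simp
  define a where "a = repl s n a' l ((D + s - j) mod s)"
  have alt: "a < s^n" unfolding a_def using repl_lt[OF s0 _ a'] l s0 by auto
  have da: "digit s n a l = (D + s - j) mod s" unfolding a_def using digit_repl_same[OF s0] s0 by simp
  have m: "((D + s - j) mod s + j) mod s = D"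
  proof -
    have "((D + s - j) mod s + j) mod s = (D + s - j + j) mod s" by (simp add: mod_add_left_eq)
    also have "D + s - j + j = D + s" using j by simp
    finally show ?thesis using D by simp
  qed
  have "repl s n a l ((digit s n a l + j) mod s) = a'"
    unfolding da m unfolding a_def using repl_repl[OF s0] repl_digit[OF s0] D_def s0 by simp
  then show "c l (if j = s - 1 then bl else j + 1) a' = 0"
    using key[OF assms alt] j by force
qed

lemma code_diff:
  assumes "c \<in> code n k d lam" "c' \<in> code n k d lam"
  shows "(\<lambda>i b a. c i b a - c' i b a) \<in> code n k d lam"
  using assms unfolding code_def by (simp add: right_diff_distrib sum_subtractf)

lemma rsum_diff: "rsum s n (\<lambda>i b a. c i b a - c' i b a) l bl i a = rsum s n c l bl i a - rsum s n c' l bl i a"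
  unfolding rsum_def by (simp add: sum_subtractf)

theorem mainTheorem4:
  fixes n k d s :: nat and lam :: "nat \<Rightarrow> nat \<Rightarrow> 'a::{finite,field}" and R :: "nat set"
  assumes "1 \<le> k" and "k \<le> d" and "d + 2 \<le> n"
    and s_def: "s = d + 1 - k"
    and "card (UNIV :: 'a set) \<ge> s * n"
    and "inj_on (\<lambda>(i, j). lam i j) ({1..n} \<times> {0..<s})"
    and "R \<subseteq> {1..n} - {1, 2}" and "card R = d"
  shows "(\<forall>c \<in> code n k d lam. \<forall>c' \<in> code n k d lam.
            (\<forall>a < s ^ n. \<forall>i \<in> R. rsum s n c 1 s i a = rsum s n c' 1 s i a) \<longrightarrow>
            (\<forall>a < s ^ n. \<forall>b \<in> {1..s}. c 1 b a = c' 1 b a) \<and>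
            (\<forall>a < s ^ n. rsum s n c 1 s 2 a = rsum s n c' 1 s 2 a))
       \<and> (\<forall>c \<in> code n k d lam. \<forall>c' \<in> code n k d lam.
            (\<forall>a < s ^ n. \<forall>i \<in> R. rsum s n c 2 (s + 1) i a = rsum s n c' 2 (s + 1) i a) \<longrightarrow>
            (\<forall>a < s ^ n. \<forall>b \<in> {1..s - 1} \<union> {s + 1}. c 2 b a = c' 2 b a) \<and>
            (\<forall>a < s ^ n. rsum s n c 2 (s + 1) 1 a = rsum s n c' 2 (s + 1) 1 a))"
proof -
  have s0: "s > 0" using assms by simp
  have n2: "2 \<in> {1..n}" "1 \<in> {1..n}" using assms by auto
  note A = assms(1,2,3) s0 assms(4) assms(6)
  have R1: "R \<subseteq> {1..n} - {1}" "R \<subseteq> {1..n} - {2}" using assms by auto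
  show ?thesis
  proof (intro conjI ballI impI)
    fix c c' assume c: "c \<in> code n k d lam" and c': "c' \<in> code n k d lam"
      and h: "\<forall>a<s ^ n. \<forall>i\<in>R. rsum s n c 1 s i a = rsum s n c' 1 s i a"
    define e where "e = (\<lambda>i b a. c i b a - c' i b a)"
    have ec: "e \<in> code n k d lam" unfolding e_def using code_diff[OF c c'] .
    have z: "\<forall>a<s^n. \<forall>i\<in>R. rsum s n e 1 s i a = 0" using h unfolding e_def rsum_diff by simp
    have K: "(\<forall>a<s^n. \<forall>i\<in>{1..n}-{1}. rsum s n e 1 s i a = 0) \<and>
         (\<forall>a'<s^n. \<forall>j<s. e 1 (if j = s - 1 then s else j + 1) a' = 0)"
      using key2[OF s0 assms(4,1,2,3,6) n2(2) _ _ ec R1(1) assms(8) z] s0 by simp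
    show "\<forall>a<s ^ n. \<forall>b\<in>{1..s}. c 1 b a = c' 1 b a"
    proof (intro allI impI ballI)
      fix a b assume a: "a < s^n" and b: "b \<in> {1..s}"
      define j where "j = b - 1"
      have j: "j < s" using b s0 j_def by auto
      have bj: "(if j = s - 1 then s else j + 1) = b" using b s0 j_def by auto
      have "e 1 (if j = s - 1 then s else j + 1) a = 0" using K a j by blast
      then show "c 1 b a = c' 1 b a" using bj unfolding e_def by simp
    qed
    show "\<forall>a<s ^ n. rsum s n c 1 s 2 a = rsum s n c' 1 s 2 a"
      using K n2 unfolding e_def rsum_diff by auto
  next
    fix c c' assume c: "c \<in> code n k d lam" and c': "c' \<in> code n k d lam"
      and h: "\<forall>a<s ^ n. \<forall>i\<in>R. rsum s n c 2 (s + 1) i a = rsum s n c' 2 (s + 1) i a"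
    define e where "e = (\<lambda>i b a. c i b a - c' i b a)"
    have ec: "e \<in> code n k d lam" unfolding e_def using code_diff[OF c c'] .
    have z: "\<forall>a<s^n. \<forall>i\<in>R. rsum s n e 2 (s + 1) i a = 0" using h unfolding e_def rsum_diff by simp
    have K: "(\<forall>a<s^n. \<forall>i\<in>{1..n}-{2}. rsum s n e 2 (s + 1) i a = 0) \<and>
         (\<forall>a'<s^n. \<forall>j<s. e 2 (if j = s - 1 then s + 1 else j + 1) a' = 0)"
      using key2[OF s0 assms(4,1,2,3,6) n2(1) _ _ ec R1(2) assms(8) z] s0 by simp
    show "\<forall>a<s ^ n. \<forall>b\<in>{1..s - 1} \<union> {s + 1}. c 2 b a = c' 2 b a"
    proof (intro allI impI ballI)
      fix a b assume a: "a < s^n" and b: "b \<in> {1..s - 1} \<union> {s + 1}"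
      define j where "j = (if b = s + 1 then s - 1 else b - 1)"
      have j: "j < s" using b s0 j_def by auto
      have bj: "(if j = s - 1 then s + 1 else j + 1) = b" using b s0 j_def by auto
      have "e 2 (if j = s - 1 then s + 1 else j + 1) a = 0" using K a j by blast
      then show "c 2 b a = c' 2 b a" using bj unfolding e_def by simp
    qed
    show "\<forall>a<s ^ n. rsum s n c 2 (s + 1) 1 a = rsum s n c' 2 (s + 1) 1 a"
      using K n2 unfolding e_def rsum_diff by auto
  qed
qed

end
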